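(* In the isotropic setting below, fix $r>0$ and $F,F_p\in\mathrm{GL}^+(3)$, and let $C_p=F_p^TF_p$, $U_p=\sqrt{C_p}$. Then $$-F_p^{-1}\,\mathcal N_r(\Sigma_e)\,F_p^{-T}=-U_p^{-1}\,\mathcal N_r(\mathring\Sigma)\,U_p^{-1}.$$ Consequently, for a differentiable curve $t\mapsto F_p(t)$ at fixed $F$, the Lion flow rule $\frac{d}{dt}[C_p^{-1}]\in-F_p^{-1}\mathcal N_r(\Sigma_e)F_p^{-T}$ holds if and only if the Grandi–Stefanelli flow rule $\sqrt{C_p}\,\frac{d}{dt}[C_p^{-1}]\,\sqrt{C_p}\in-\mathcal N_r(\mathring\Sigma)$ holds; the latter depends on $C$ and $C_p$ only.
   Context: $W:\mathrm{GL}^+(3)\to\mathbb{R}$ objective and isotropic ($W(QFR)=W(F)$, $Q,R\in\mathrm{SO}(3)$), written $W(F_e)=\Psi(I_1(C_e),I_2(C_e),I_3(C_e))$ with $\Psi\in C^1$; $\widetilde W(X)=\Psi(\mathrm{tr}X,\mathrm{tr}(\mathrm{Cof}X),\det X)$. $F_e=FF_p^{-1}$, $C=F^TF$, $C_e=F_e^TF_e$. $\langle X,Y\rangle=\mathrm{tr}(XY^T)$, $\|\cdot\|$ Frobenius norm, $D$ gradient, $\mathrm{dev}_3X=X-\frac13\mathrm{tr}(X)\mathbb{1}$, $\mathrm{sym}X=\frac12(X+X^T)$. $\Sigma_e=F_e^TDW(F_e)$ (symmetric). $\mathring\Sigma:=2\,U_p^{-1}\mathrm{sym}[C\,D\widetilde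 W(CC_p^{-1})]U_p^{-1}$. For $r>0$ and symmetric $S$: $\mathcal N_r(S)=\{0\}$ if $\|\mathrm{dev}_3S\|<r$, $\{\lambda\,\mathrm{dev}_3S/\|\mathrm{dev}_3S\|:\lambda\ge0\}$ if $\|\mathrm{dev}_3S\|=r$, $\emptyset$ if $\|\mathrm{dev}_3S\|>r$ (the subdifferential of the indicator function of $\{\|\mathrm{dev}_3S\|\le r\}$). $M\mathcal AN=\{MXN:X\in\mathcal A\}$. *)

theory Defs
  imports "HOL-Analysis.Analysis"
begin

type_synonym mat3 = "real^3^3"

text \<open>Cofactor matrix: (i,j) entry is the (i,j) cofactor of X.\<close>
definition Cof :: "real^'n^'n \<Rightarrow> real^'n^'n" where
  "Cof X = (\<chi> i j. det (\<chi> k l. if k = i \<and> l = j then 1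
                               else if k = i \<or> l = j then 0 else X $ k $ l))"

definition I1 :: "mat3 \<Rightarrow> real" where "I1 X = trace X"
definition I2 :: "mat3 \<Rightarrow> real" where "I2 X = trace (Cof X)"
definition I3 :: "mat3 \<Rightarrow> real" where "I3 X = det X"

text \<open>The inner product on real^3^3 is the Frobenius product tr(X Y^T);
  the norm is the Frobenius norm.\<close>

definition grad :: "(mat3 \<Rightarrow> real) \<Rightarrow> mat3 \<Rightarrow> mat3" where
  "grad f X = (THE G. (f has_derivative (\<lambda>H. G \<bullet> H)) (at X))"

definition GLplus :: "mat3 set" where "GLplus = {F. det F > 0}"

definition SO3 :: "mat3 set" where
  "SO3 = {Q. transpose Q ** Q = mat 1 \<and> det Q = 1}"

definition sym :: "mat3 \<Rightarrow> mat3" where "sym X = (1/2) *\<^sub>R (X + transpose X)"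

definition dev3 :: "mat3 \<Rightarrow> mat3" where "dev3 X = X - (trace X / 3) *\<^sub>R mat 1"

definition pos_def :: "mat3 \<Rightarrow> bool" where
  "pos_def U \<longleftrightarrow> (\<forall>x. x \<noteq> 0 \<longrightarrow> x \<bullet> (U *v x) > 0)"

definition msqrt :: "mat3 \<Rightarrow> mat3" where
  "msqrt C = (THE U. transpose U = U \<and> pos_def U \<and> U ** U = C)"

text \<open>Normal cone N_r(S) (subdifferential of the indicator of ||dev_3 S|| <= r).\<close>
definition Ncone :: "real \<Rightarrow> mat3 \<Rightarrow> mat3 set" where
  "Ncone r S = (if norm (dev3 S) < r then {0}
               else if norm (dev3 S) = r
                 then {c *\<^sub>R (dev3 S /\<^sub>R norm (dev3 S)) | c. c \<ge> 0}
               else {})"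

definition neg_sandwich :: "mat3 \<Rightarrow> mat3 set \<Rightarrow> mat3 \<Rightarrow> mat3 set" where
  "neg_sandwich M A N = (\<lambda>X. - (M ** X ** N)) ` A"

definition posR3 :: "(real \<times> real \<times> real) set" where
  "posR3 = {x. 0 < fst x \<and> 0 < fst (snd x) \<and> 0 < snd (snd x)}"

definition C1_on :: "(real \<times> real \<times> real) set \<Rightarrow> (real \<times> real \<times> real \<Rightarrow> real) \<Rightarrow> bool" where
  "C1_on S \<Psi> \<longleftrightarrow> (\<exists>D. (\<forall>x\<in>S. (\<Psi> has_derivative blinfun_apply (D x)) (at x))
                     \<and> continuous_on S D)"

definition Wtilde :: "(real \<times> real \<times> real \<Rightarrow> real) \<Rightarrow> mat3 \<Rightarrow> real" where
  "Wtilde \<Psi> X = \<Psi> (trace X, trace (Cof X), det X)"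

definition Sigma_e :: "(mat3 \<Rightarrow> real) \<Rightarrow> mat3 \<Rightarrow> mat3 \<Rightarrow> mat3" where
  "Sigma_e W F Fp = (let Fe = F ** matrix_inv Fp in transpose Fe ** grad W Fe)"

definition Sigma_ring :: "(real \<times> real \<times> real \<Rightarrow> real) \<Rightarrow> mat3 \<Rightarrow> mat3 \<Rightarrow> mat3" where
  "Sigma_ring \<Psi> C Cp = (let Up = msqrt Cp in
      2 *\<^sub>R (matrix_inv Up ** sym (C ** grad (Wtilde \<Psi>) (C ** matrix_inv Cp)) ** matrix_inv Up))"

end

theory Submission
  imports Defs
begin


lemma inv_props:
  fixes A :: mat3
  assumes "det A \<noteq> 0"
  shows "A ** matrix_inv A = mat 1" "matrix_inv A ** A = mat 1"
proof -
  have "invertible A" using assms invertible_det_nz by blast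
  then have "\<exists>A'. A ** A' = mat 1 \<and> A' ** A = mat 1" unfolding invertible_def by blast
  from someI_ex[OF this] show "A ** matrix_inv A = mat 1" "matrix_inv A ** A = mat 1"
    unfolding matrix_inv_def by auto
qed

lemma inv_unique:
  fixes A B :: mat3
  assumes "A ** B = mat 1"
  shows "matrix_inv A = B"
proof -
  have "det A * det B = 1" using assms det_mul[of A B] by simp
  then have "det A \<noteq> 0" by auto
  have "matrix_inv A = matrix_inv A ** (A ** B)" using assms by simp
  also have "\<dots> = B" using inv_props(2)[OF \<open>det A \<noteq> 0\<close>] by (simp add: matrix_mul_assoc)
  finally show ?thesis .
qed

lemma frob: "(A::mat3) \<bullet> (B::mat3) = trace (transpose A ** B)"
  unfolding inner_vec_def trace_def matrix_matrix_mult_def transpose_def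
  by (simp add: sum_3)

lemma frob_mult_right: "(A::mat3) \<bullet> ((B::mat3) ** (C::mat3)) = (transpose B ** A) \<bullet> C"
proof -
  have "(transpose B ** A) \<bullet> C = trace (transpose (transpose B ** A) ** C)" by (rule frob)
  also have "\<dots> = trace (transpose A ** (B ** C))" by (simp add: matrix_transpose_mul matrix_mul_assoc)
  also have "\<dots> = A \<bullet> (B ** C)" by (rule frob[symmetric])
  finally show ?thesis by simp
qed

lemma frob_mult_left: "(A::mat3) \<bullet> ((B::mat3) ** (C::mat3)) = (A ** transpose C) \<bullet> B"
proof -
  have "(A ** transpose C) \<bullet> B = trace (transpose (A ** transpose C) ** B)" by (rule frob)
  also have "\<dots> = trace (C ** (transpose A ** B))" by (simp add: matrix_transpose_mul matrix_mul_assoc)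
  also have "\<dots> = trace ((transpose A ** B) ** C)" by (rule trace_mul_sym)
  also have "\<dots> = trace (transpose A ** (B ** C))" by (simp add: matrix_mul_assoc)
  also have "\<dots> = A \<bullet> (B ** C)" by (rule frob[symmetric])
  finally show ?thesis by simp
qed



lemma tcof_formula: "trace (Cof (X::mat3)) = ((trace X)^2 - trace (X ** X)) / 2"
  unfolding Cof_def trace_def sum_3 matrix_matrix_mult_def
  by (simp add: det_3 sum_3 power2_eq_square algebra_simps)



lemma sym_inner:
  fixes A :: mat3
  assumes "transpose A = A"
  shows "(A *v x) \<bullet> y = x \<bullet> (A *v y)"
proof -
  have "(A *v x) \<bullet> y = (x v* transpose A) \<bullet> y" by simp
  also have "\<dots> = x \<bullet> (transpose A *v y)" by (rule dot_lmul_matrix)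
  finally show ?thesis using assms by simp
qed

lemma eig_exists:
  fixes A :: mat3 and S :: "(real^3) set"
  assumes sA: "transpose A = A" and sub: "subspace S" and x0: "x0 \<in> S" "x0 \<noteq> 0"
    and inv: "\<forall>x\<in>S. A *v x \<in> S"
  shows "\<exists>v\<in>S. norm v = 1 \<and> A *v v = (v \<bullet> (A *v v)) *\<^sub>R v"
proof -
  define K where "K = S \<inter> sphere 0 1"
  define f where "f x = x \<bullet> (A *v x)" for x :: "real^3"
  have "compact K" unfolding K_def
    using closed_subspace[OF sub] compact_sphere closed_Int_compact by blast
  moreover have "x0 /\<^sub>R norm x0 \<in> K" unfolding K_def using x0 sub
    by (auto simp: subspace_scale)
  then have "K \<noteq> {}" by auto
  moreover have "continuous_on K f" unfolding f_def
    by (intro continuous_intros linear_continuous_on matrix_vector_mul_bounded_linear)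
  ultimately obtain v where vK: "v \<in> K" and vmax: "\<forall>y\<in>K. f y \<le> f v"
    using continuous_attains_sup[of K f] by blast
  define l where "l = f v"
  have vS: "v \<in> S" and nv: "norm v = 1" using vK unfolding K_def by auto
  have vv: "v \<bullet> v = 1" using nv by (simp add: dot_square_norm)
  have fhom: "f (c *\<^sub>R y) = c^2 * f y" for c y
    unfolding f_def by (simp add: matrix_vector_mult_scaleR power2_eq_square)
  have bound: "f y \<le> l * (y \<bullet> y)" if "y \<in> S" for y
  proof (cases "y = 0")
    case True then show ?thesis by (simp add: f_def)
  next
    case False
    have "y /\<^sub>R norm y \<in> K" unfolding K_def using that False sub by (auto simp: subspace_scale)
    then have "f (y /\<^sub>R norm y) \<le> l" using vmax l_def by auto
    then have "f y / (norm y)^2 \<le> l" using fhom[of "inverse (norm y)" y]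
      by (simp add: power_inverse divide_inverse mult.commute)
    then show ?thesis using False by (simp add: dot_square_norm pos_divide_le_eq)
  qed
  define w where "w = A *v v - l *\<^sub>R v"
  have wS: "w \<in> S" unfolding w_def using inv vS sub
    by (simp add: subspace_diff subspace_scale)
  have vw: "v \<bullet> w = 0" unfolding w_def l_def f_def using vv
    by (simp add: inner_diff_right)
  have wAv: "w \<bullet> (A *v v) = w \<bullet> w"
  proof -
    have "A *v v = l *\<^sub>R v + w" unfolding w_def by simp
    then show ?thesis using vw by (simp add: inner_add_right inner_commute)
  qed
  have key: "2 * t * (w \<bullet> w) \<le> t^2 * (l * (w \<bullet> w) - w \<bullet> (A *v w))" for t :: real
  proof -
    have "v + t *\<^sub>R w \<in> S" using vS wS sub by (simp add: subspace_add subspace_scale)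
    from bound[OF this] have b: "f (v + t *\<^sub>R w) \<le> l * ((v + t *\<^sub>R w) \<bullet> (v + t *\<^sub>R w))" .
    have fe: "f (v + t *\<^sub>R w) = l + 2 * t * (w \<bullet> w) + t^2 * (w \<bullet> (A *v w))"
    proof -
      have "f (v + t *\<^sub>R w) = v \<bullet> (A *v v) + t * (v \<bullet> (A *v w)) + t * (w \<bullet> (A *v v)) + t^2 * (w \<bullet> (A *v w))"
        unfolding f_def by (simp add: matrix_vector_right_distrib matrix_vector_mult_scaleR
            inner_add_left inner_add_right power2_eq_square algebra_simps)
      moreover have "v \<bullet> (A *v w) = w \<bullet> (A *v v)"
        using sym_inner[OF sA, of v w] by (simp add: inner_commute)
      ultimately show ?thesis using wAv l_def f_def by (simp add: algebra_simps)
    qed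
    have ne: "(v + t *\<^sub>R w) \<bullet> (v + t *\<^sub>R w) = 1 + t^2 * (w \<bullet> w)"
      using vv vw by (simp add: inner_add_left inner_add_right inner_commute power2_eq_square)
    have "l + 2 * t * (w \<bullet> w) + t^2 * (w \<bullet> (A *v w)) \<le> l * (1 + t^2 * (w \<bullet> w))"
      using b unfolding fe ne .
    then show ?thesis by (simp add: ring_distribs mult.left_commute)
  qed
  have "w \<bullet> w = 0"
  proof (rule ccontr)
    assume ne: "w \<bullet> w \<noteq> 0"
    then have pos: "w \<bullet> w > 0" by (simp add: order_neq_le_trans)
    define c where "c = l * (w \<bullet> w) - w \<bullet> (A *v w)"
    define t where "t = (w \<bullet> w) / (\<bar>c\<bar> + 1)"
    have tpos: "t > 0" using pos unfolding t_def by simp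
    have "2 * t * (w \<bullet> w) \<le> t^2 * c" using key[of t] unfolding c_def .
    then have "2 * (w \<bullet> w) \<le> t * c" using tpos by (simp add: power2_eq_square)
    moreover have "t * c \<le> t * \<bar>c\<bar>" using tpos by (simp add: mult_left_mono)
    moreover have "t * \<bar>c\<bar> < w \<bullet> w" unfolding t_def using pos
      by (simp add: divide_less_eq field_simps)
    ultimately show False using pos by linarith
  qed
  then have "w = 0" by simp
  then show ?thesis using vS nv unfolding w_def l_def f_def by auto
qed



definition dmat :: "(3 \<Rightarrow> real) \<Rightarrow> mat3" where
  "dmat l = (\<chi> i j. if i = j then l i else 0)"

lemma dmat_mult: "dmat a ** dmat b = dmat (\<lambda>i. a i * b i)"
proof -
  have "(\<Sum>k\<in>UNIV. (if i = k then a i else 0) * (if k = j then b k else 0)) = (if i = j then a i * b i else 0)"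
    for i j :: 3
    using exhaust_3[of i] exhaust_3[of j] by (auto simp: sum_3)
  then show ?thesis unfolding dmat_def matrix_matrix_mult_def by (simp add: vec_eq_iff)
qed

lemma dmat_transpose: "transpose (dmat a) = dmat a"
  unfolding dmat_def transpose_def by (simp add: vec_eq_iff)

lemma dmat_quad: "y \<bullet> (dmat a *v y) = (\<Sum>i\<in>UNIV. a i * (y $ i)^2)"
  unfolding dmat_def matrix_vector_mult_def inner_vec_def
  by (simp add: if_distrib if_distribR sum.delta power2_eq_square algebra_simps cong: if_cong)

lemma spectral3:
  fixes A :: mat3
  assumes sA: "transpose A = A"
  shows "\<exists>Q l. transpose Q ** Q = mat 1 \<and> Q ** transpose Q = mat 1 \<and> A = Q ** dmat l ** transpose Q
           \<and> (pos_def A \<longrightarrow> (\<forall>i. l i > 0))"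
proof -
  obtain v1 where n1: "norm v1 = 1" and e1: "A *v v1 = (v1 \<bullet> (A *v v1)) *\<^sub>R v1"
    using eig_exists[OF sA subspace_UNIV, of "axis 1 1"] by (auto simp: axis_eq_0_iff)
  define l1 where "l1 = v1 \<bullet> (A *v v1)"
  have v10: "v1 \<noteq> 0" using n1 by auto
  obtain e where ce: "cross3 v1 e \<noteq> 0" using cross_basis_nonzero[OF v10] by blast
  have inv2: "\<forall>x\<in>{x. v1 \<bullet> x = 0}. A *v x \<in> {x. v1 \<bullet> x = 0}"
  proof
    fix x assume "x \<in> {x. v1 \<bullet> x = 0}"
    then have "v1 \<bullet> x = 0" by simp
    have "v1 \<bullet> (A *v x) = (A *v v1) \<bullet> x" using sym_inner[OF sA] by simp
    also have "\<dots> = 0" using e1 \<open>v1 \<bullet> x = 0\<close> by (metis inner_scaleR_left mult_zero_right)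
    finally show "A *v x \<in> {x. v1 \<bullet> x = 0}" by simp
  qed
  obtain v2 where v2S: "v1 \<bullet> v2 = 0" and n2: "norm v2 = 1" and e2: "A *v v2 = (v2 \<bullet> (A *v v2)) *\<^sub>R v2"
    using eig_exists[OF sA subspace_hyperplane, of "cross3 v1 e" v1] ce inv2 dot_cross_self(1)[of v1 e]
    by auto
  define S3 where "S3 = {x. v1 \<bullet> x = 0} \<inter> {x. v2 \<bullet> x = 0}"
  have sub3: "subspace S3" unfolding S3_def by (intro subspace_inter subspace_hyperplane)
  have inv3: "\<forall>x\<in>S3. A *v x \<in> S3"
  proof
    fix x assume "x \<in> S3"
    then have a: "v1 \<bullet> x = 0" "v2 \<bullet> x = 0" unfolding S3_def by auto
    have "v1 \<bullet> (A *v x) = (A *v v1) \<bullet> x" using sym_inner[OF sA] by simp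
    also have "\<dots> = 0" using e1 a by (metis inner_scaleR_left mult_zero_right)
    finally have b1: "v1 \<bullet> (A *v x) = 0" .
    have "v2 \<bullet> (A *v x) = (A *v v2) \<bullet> x" using sym_inner[OF sA] by simp
    also have "\<dots> = 0" using e2 a by (metis inner_scaleR_left mult_zero_right)
    finally show "A *v x \<in> S3" using b1 unfolding S3_def by simp
  qed
  have c12: "cross3 v1 v2 \<in> S3" unfolding S3_def using dot_cross_self(1)[of v1 v2] dot_cross_self(3)[of v1 v2]
    by (simp add: inner_commute)
  have "(norm (cross3 v1 v2))^2 = 1" using norm_cross[of v1 v2] n1 n2 v2S by simp
  then have c12n: "cross3 v1 v2 \<noteq> 0" by auto
  obtain v3 where v3S: "v3 \<in> S3" and n3: "norm v3 = 1" and e3: "A *v v3 = (v3 \<bullet> (A *v v3)) *\<^sub>R v3"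
    using eig_exists[OF sA sub3 c12 c12n inv3] by blast
  define v where "v i = (if i = 1 then v1 else if i = 2 then v2 else v3)" for i :: 3
  define l where "l i = v i \<bullet> (A *v v i)" for i
  have ev: "A *v v i = l i *\<^sub>R v i" for i
    unfolding l_def v_def using e1 e2 e3 by auto
  have nv: "norm (v i) = 1" for i unfolding v_def using n1 n2 n3 by auto
  have on: "v i \<bullet> v j = (if i = j then 1 else 0)" for i j
  proof -
    have sq: "x \<bullet> x = 1" if "norm x = 1" for x :: "real^3" using that by (simp add: dot_square_norm)
    have o: "v1 \<bullet> v2 = 0" "v1 \<bullet> v3 = 0" "v2 \<bullet> v3 = 0" using v2S v3S unfolding S3_def by auto
    show ?thesis
      using exhaust_3[of i] exhaust_3[of j] sq[OF n1] sq[OF n2] sq[OF n3] o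
      unfolding v_def by (auto simp: inner_commute)
  qed
  define Q :: mat3 where "Q = (\<chi> i j. v j $ i)"
  have QQ: "transpose Q ** Q = mat 1"
    unfolding Q_def transpose_def matrix_matrix_mult_def mat_def
    using on by (simp add: vec_eq_iff inner_vec_def)
  then have QQ2: "Q ** transpose Q = mat 1" using matrix_left_right_inverse by blast
  have AQ: "A ** Q = Q ** dmat l"
  proof -
    have "(A *v v j) $ i = l j * v j $ i" for i j using ev[of j] by simp
    then show ?thesis
      unfolding Q_def dmat_def matrix_matrix_mult_def
      by (simp add: vec_eq_iff matrix_vector_mult_def if_distrib if_distribR sum.delta mult.commute
          cong: if_cong)
  qed
  have "A = A ** Q ** transpose Q" using QQ2 by (simp add: matrix_mul_assoc[symmetric])
  also have "\<dots> = Q ** dmat l ** transpose Q" using AQ by simp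
  finally have Aeq: "A = Q ** dmat l ** transpose Q" .
  have "pos_def A \<longrightarrow> (\<forall>i. l i > 0)"
    using nv unfolding pos_def_def l_def by (metis norm_zero zero_neq_one)
  then show ?thesis using QQ QQ2 Aeq by blast
qed



lemma mm_add_r: "((A::mat3) + B) ** C = A ** C + B ** C"
  by (simp add: matrix_matrix_mult_def vec_eq_iff sum.distrib algebra_simps)
lemma mm_sub_l: "(A::mat3) ** (B - C) = A ** B - A ** C"
  by (simp add: matrix_matrix_mult_def vec_eq_iff sum_subtractf algebra_simps)
lemma mm_sub_r: "((A::mat3) - B) ** C = A ** C - B ** C"
  by (simp add: matrix_matrix_mult_def vec_eq_iff sum_subtractf algebra_simps)
lemma mm_neg_l: "(- (A::mat3)) ** B = - (A ** B)"
  by (simp add: matrix_matrix_mult_def vec_eq_iff sum_negf)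
lemma mm_neg_r: "(A::mat3) ** (- B) = - (A ** B)"
  by (simp add: matrix_matrix_mult_def vec_eq_iff sum_negf)
lemma tr_add: "transpose ((A::mat3) + B) = transpose A + transpose B"
  by (simp add: transpose_def vec_eq_iff)
lemma tr_sub: "transpose ((A::mat3) - B) = transpose A - transpose B"
  by (simp add: transpose_def vec_eq_iff)
lemma tr_neg: "transpose (- (A::mat3)) = - transpose A"
  by (simp add: transpose_def vec_eq_iff)

lemma trace_quad:
  "trace (transpose (M::mat3) ** U ** M) = (\<Sum>i\<in>UNIV. column i M \<bullet> (U *v column i M))"
  unfolding trace_def matrix_matrix_mult_def transpose_def column_def inner_vec_def
    matrix_vector_mult_def
  by (simp add: sum_3 algebra_simps)

lemma sqrt_exists:
  fixes A :: mat3
  assumes sA: "transpose A = A" and pA: "pos_def A"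
  shows "\<exists>U. transpose U = U \<and> pos_def U \<and> U ** U = A"
proof -
  obtain Q l where QQ: "transpose Q ** Q = mat 1" and QQ2: "Q ** transpose Q = mat 1"
    and Aeq: "A = Q ** dmat l ** transpose Q" and lpos: "\<forall>i. l i > 0"
    using spectral3[OF sA] pA by blast
  define s where "s i = sqrt (l i)" for i
  define U where "U = Q ** dmat s ** transpose Q"
  have "transpose U = U" unfolding U_def
    by (simp add: matrix_transpose_mul dmat_transpose matrix_mul_assoc)
  moreover have "U ** U = A"
  proof -
    have "U ** U = Q ** dmat s ** (transpose Q ** Q) ** dmat s ** transpose Q"
      unfolding U_def by (simp add: matrix_mul_assoc)
    also have "\<dots> = Q ** (dmat s ** dmat s) ** transpose Q" using QQ by (simp add: matrix_mul_assoc)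
    also have "dmat s ** dmat s = dmat l" unfolding dmat_mult s_def using lpos
      by (simp add: less_imp_le)
    finally show ?thesis using Aeq by simp
  qed
  moreover have "pos_def U" unfolding pos_def_def
  proof (intro allI impI)
    fix x :: "real^3" assume x0: "x \<noteq> 0"
    define y where "y = transpose Q *v x"
    have "Q *v y = x" unfolding y_def by (simp only: matrix_vector_mul_assoc QQ2 matrix_vector_mul_lid)
    then have y0: "y \<noteq> 0" using x0 by auto
    then obtain k where yk: "y $ k \<noteq> 0" by (auto simp: vec_eq_iff)
    have "U *v x = Q *v (dmat s *v (transpose Q *v x))"
      unfolding U_def by (simp only: matrix_vector_mul_assoc matrix_mul_assoc)
    then have "x \<bullet> (U *v x) = x \<bullet> (Q *v (dmat s *v y))" unfolding y_def by simp
    also have "\<dots> = (x v* Q) \<bullet> (dmat s *v y)" by (simp add: dot_lmul_matrix)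
    also have "\<dots> = y \<bullet> (dmat s *v y)" unfolding y_def by simp
    also have "\<dots> = (\<Sum>i\<in>UNIV. s i * (y $ i)^2)" by (rule dmat_quad)
    finally have eq: "x \<bullet> (U *v x) = (\<Sum>i\<in>UNIV. s i * (y $ i)^2)" .
    have nn: "\<forall>i\<in>UNIV. 0 \<le> s i * (y $ i)^2" unfolding s_def using lpos by (simp add: less_imp_le)
    have "0 < s k * (y $ k)^2" unfolding s_def using lpos yk by simp
    also have "\<dots> \<le> (\<Sum>i\<in>UNIV. s i * (y $ i)^2)"
      by (rule member_le_sum) (use nn in auto)
    finally show "0 < x \<bullet> (U *v x)" using eq by simp
  qed
  ultimately show ?thesis by blast
qed

lemma sqrt_unique:
  fixes U V :: mat3
  assumes sU: "transpose U = U" and pU: "pos_def U" and sV: "transpose V = V" and pV: "pos_def V"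
    and eq: "U ** U = V ** V"
  shows "U = V"
proof -
  define D where "D = U - V"
  have sD: "transpose D = D" unfolding D_def using sU sV by (simp add: tr_sub)
  have "U ** D + D ** V = U ** U - V ** V"
    unfolding D_def by (simp add: mm_sub_l mm_sub_r)
  then have z: "U ** D + D ** V = 0" using eq by simp
  have "D ** (U ** D) + D ** (D ** V) = 0"
    using arg_cong[OF z, of "\<lambda>X. D ** X"] by (simp add: matrix_add_ldistrib)
  then have "trace (D ** (U ** D) + D ** (D ** V)) = 0" by (simp add: trace_def)
  then have "trace (D ** (U ** D)) + trace (D ** (D ** V)) = 0" by (simp add: trace_add)
  moreover have "trace (D ** (D ** V)) = trace (transpose D ** V ** D)"
  proof -
    have "trace (D ** (D ** V)) = trace ((D ** D) ** V)" by (simp add: matrix_mul_assoc)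
    also have "\<dots> = trace (V ** (D ** D))" by (rule trace_mul_sym)
    also have "\<dots> = trace ((V ** D) ** D)" by (simp add: matrix_mul_assoc)
    also have "\<dots> = trace (D ** (V ** D))" by (rule trace_mul_sym)
    finally show ?thesis using sD by (simp add: matrix_mul_assoc)
  qed
  moreover have "trace (D ** (U ** D)) = trace (transpose D ** U ** D)"
    using sD by (simp add: matrix_mul_assoc)
  ultimately have s0: "(\<Sum>i\<in>UNIV. column i D \<bullet> (U *v column i D)) + (\<Sum>i\<in>UNIV. column i D \<bullet> (V *v column i D)) = 0"
    by (simp add: trace_quad)
  have nnU: "\<forall>i\<in>UNIV. 0 \<le> column i D \<bullet> (U *v column i D)"
    using pU unfolding pos_def_def by (metis inner_zero_left order_less_imp_le order_refl)
  have nnV: "\<forall>i\<in>UNIV. 0 \<le> column i D \<bullet> (V *v column i D)"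
    using pV unfolding pos_def_def by (metis inner_zero_left order_less_imp_le order_refl)
  have "(\<Sum>i\<in>UNIV. column i D \<bullet> (U *v column i D)) = 0"
  proof -
    have a: "0 \<le> (\<Sum>i\<in>UNIV. column i D \<bullet> (U *v column i D))" by (rule sum_nonneg) (use nnU in auto)
    have b: "0 \<le> (\<Sum>i\<in>UNIV. column i D \<bullet> (V *v column i D))" by (rule sum_nonneg) (use nnV in auto)
    show ?thesis using s0 a b by linarith
  qed
  then have "\<forall>i\<in>UNIV. column i D \<bullet> (U *v column i D) = 0"
    using sum_nonneg_eq_0_iff[of UNIV "\<lambda>i. column i D \<bullet> (U *v column i D)"] nnU by auto
  then have "\<forall>i. column i D = 0" using pU unfolding pos_def_def by (metis less_irrefl UNIV_I)
  then have "D = 0" by (simp add: column_def vec_eq_iff)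
  then show ?thesis unfolding D_def by simp
qed

lemma msqrt_props:
  fixes A :: mat3
  assumes sA: "transpose A = A" and pA: "pos_def A"
  shows "transpose (msqrt A) = msqrt A \<and> pos_def (msqrt A) \<and> msqrt A ** msqrt A = A"
proof -
  obtain U where U: "transpose U = U \<and> pos_def U \<and> U ** U = A" using sqrt_exists[OF sA pA] by blast
  have "msqrt A = U" unfolding msqrt_def
    by (rule the_equality) (use U sqrt_unique in auto)
  then show ?thesis using U by simp
qed



lemma tcof_swap: "trace (Cof ((A::mat3) ** B)) = trace (Cof (B ** A))"
proof -
  have "trace ((A ** B) ** (A ** B)) = trace (A ** (B ** A ** B))" by (simp add: matrix_mul_assoc)
  also have "\<dots> = trace ((B ** A ** B) ** A)" by (rule trace_mul_sym)
  also have "\<dots> = trace ((B ** A) ** (B ** A))" by (simp add: matrix_mul_assoc)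
  finally have "trace ((A ** B) ** (A ** B)) = trace ((B ** A) ** (B ** A))" .
  then show ?thesis unfolding tcof_formula trace_mul_sym[of A B] by simp
qed

lemma det_swap: "det ((A::mat3) ** B) = det (B ** A)"
  by (simp add: det_mul mult.commute)

lemma Wtilde_swap: "Wtilde \<Psi> ((A::mat3) ** B) = Wtilde \<Psi> (B ** A)"
  unfolding Wtilde_def by (simp add: tcof_swap det_swap trace_mul_sym[of A B])

lemma trace_dmat: "trace (dmat l) = l 1 + l 2 + l 3"
  unfolding trace_def dmat_def by (simp add: sum_3)

lemma det_dmat: "det (dmat l) = l 1 * l 2 * l 3"
  unfolding dmat_def by (simp add: det_3)

lemma invariants_pos:
  fixes M :: mat3
  assumes sM: "transpose M = M" and pM: "pos_def M"
  shows "0 < trace M \<and> 0 < trace (Cof M) \<and> 0 < det M"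
proof -
  obtain Q l where QQ: "transpose Q ** Q = mat 1"
    and Meq: "M = Q ** dmat l ** transpose Q" and lpos: "\<forall>i. l i > 0"
    using spectral3[OF sM] pM by blast
  have swap: "transpose Q ** (Q ** dmat l) = dmat l" using QQ by (simp add: matrix_mul_assoc)
  have M2: "M = (Q ** dmat l) ** transpose Q" using Meq .
  have "trace M = trace (dmat l)" unfolding M2 trace_mul_sym[of "Q ** dmat l"] swap ..
  moreover have "trace (Cof M) = trace (Cof (dmat l))" unfolding M2 tcof_swap[of "Q ** dmat l"] swap ..
  moreover have "det M = det (dmat l)" unfolding M2 det_swap[of "Q ** dmat l"] swap ..
  moreover have "trace (Cof (dmat l)) = l 1 * l 2 + l 1 * l 3 + l 2 * l 3"
    unfolding tcof_formula dmat_mult trace_dmat by (simp add: power2_eq_square algebra_simps)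
  moreover have "0 < l 1" "0 < l 2" "0 < l 3" using lpos by auto
  ultimately show ?thesis by (simp add: trace_dmat det_dmat add_pos_pos mult_pos_pos)
qed

lemma gram_pos:
  fixes F :: mat3
  assumes "det F \<noteq> 0"
  shows "transpose (transpose F ** F) = transpose F ** F \<and> pos_def (transpose F ** F)"
proof
  show "transpose (transpose F ** F) = transpose F ** F" by (simp add: matrix_transpose_mul)
  show "pos_def (transpose F ** F)" unfolding pos_def_def
  proof (intro allI impI)
    fix x :: "real^3" assume x0: "x \<noteq> 0"
    have "matrix_inv F *v (F *v x) = x" using inv_props(2)[OF assms] by (simp add: matrix_vector_mul_assoc)
    then have "F *v x \<noteq> 0" using x0 by auto
    moreover have "x \<bullet> ((transpose F ** F) *v x) = (F *v x) \<bullet> (F *v x)"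
    proof -
      have "x \<bullet> ((transpose F ** F) *v x) = x \<bullet> (transpose F *v (F *v x))"
        by (simp only: matrix_vector_mul_assoc)
      also have "\<dots> = (x v* transpose F) \<bullet> (F *v x)" by (rule dot_lmul_matrix[symmetric])
      also have "\<dots> = (F *v x) \<bullet> (F *v x)" by simp
      finally show ?thesis .
    qed
    ultimately show "0 < x \<bullet> ((transpose F ** F) *v x)" by simp
  qed
qed



definition J :: "mat3 \<Rightarrow> real \<times> real \<times> real" where
  "J Y = (trace Y, trace (Cof Y), det Y)"

lemma ent_diff: "(\<lambda>Y::mat3. Y $ i $ j) differentiable F"
  by (rule bounded_linear_imp_differentiable)
     (rule bounded_linear_compose[OF bounded_linear_vec_nth bounded_linear_vec_nth])

lemma trace_diff: "(\<lambda>Y::mat3. trace Y) differentiable (at Y0)"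
proof -
  have "(\<lambda>Y::mat3. trace Y) = (\<lambda>Y. Y$1$1 + Y$2$2 + Y$3$3)" by (simp add: trace_def sum_3 fun_eq_iff)
  then show ?thesis by (simp add: ent_diff)
qed

lemma trace_sq_diff: "(\<lambda>Y::mat3. trace (Y ** Y)) differentiable (at Y0)"
proof -
  have "(\<lambda>Y::mat3. trace (Y ** Y)) = (\<lambda>Y. \<Sum>i\<in>UNIV. \<Sum>k\<in>UNIV. Y$i$k * Y$k$i)"
    by (simp add: trace_def matrix_matrix_mult_def fun_eq_iff)
  then show ?thesis by (simp add: ent_diff)
qed

lemma det_diff: "(\<lambda>Y::mat3. det Y) differentiable (at Y0)"
  unfolding det_3 by (simp add: ent_diff)

lemma tcof_diff: "(\<lambda>Y::mat3. trace (Cof Y)) differentiable (at Y0)"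
proof -
  have "(\<lambda>Y::mat3. trace (Cof Y)) = (\<lambda>Y. ((trace Y)^2 - trace (Y ** Y)) * (1/2))"
    by (simp add: tcof_formula fun_eq_iff)
  then show ?thesis using trace_diff trace_sq_diff by simp
qed

lemma J_diff: "J differentiable (at Y0)"
  unfolding J_def using trace_diff tcof_diff det_diff by simp

lemma Psi_diff:
  assumes "C1_on posR3 \<Psi>" "p \<in> posR3"
  shows "\<Psi> differentiable (at p)"
  using assms unfolding C1_on_def differentiable_def by blast

lemma Wt_diff:
  assumes "C1_on posR3 \<Psi>" "J X \<in> posR3"
  shows "Wtilde \<Psi> differentiable (at X)"
proof -
  have "Wtilde \<Psi> = (\<lambda>Y. \<Psi> (J Y))" by (simp add: Wtilde_def J_def fun_eq_iff)
  then show ?thesis using differentiable_compose[OF Psi_diff[OF assms] J_diff] by simp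
qed

lemma linear_transpose3: "bounded_linear (transpose :: mat3 \<Rightarrow> mat3)"
  unfolding linear_conv_bounded_linear[symmetric]
  by (rule linearI) (simp_all add: tr_add transpose_scalar)

lemma mult_bil: "bounded_bilinear (\<lambda>(A::mat3) (B::mat3). A ** B)"
  unfolding bilinear_conv_bounded_bilinear[symmetric] bilinear_def
  by (auto intro!: linearI simp: matrix_add_ldistrib mm_add_r matrix_scalar_ac scalar_matrix_assoc)

lemma rmult_bl: "bounded_linear (\<lambda>Y::mat3. Y ** M)"
  unfolding linear_conv_bounded_linear[symmetric]
  by (rule linearI) (simp_all add: mm_add_r scalar_matrix_assoc)

lemma gram_deriv:
  fixes M F :: mat3
  shows "((\<lambda>Y::mat3. transpose Y ** Y ** M) has_derivative
      (\<lambda>H. (transpose H ** F + transpose F ** H) ** M)) (at F)"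
proof -
  have t: "(transpose has_derivative transpose) (at F)"
    by (rule bounded_linear_imp_has_derivative[OF linear_transpose3])
  have i: "((\<lambda>Y::mat3. Y) has_derivative (\<lambda>H. H)) (at F)" by (rule has_derivative_ident)
  have g1: "((\<lambda>Y. transpose Y ** Y) has_derivative (\<lambda>H. transpose F ** H + transpose H ** F)) (at F)"
    using bounded_bilinear.FDERIV[OF mult_bil t i] by simp
  have "((\<lambda>Y. (transpose Y ** Y) ** M) has_derivative (\<lambda>H. (transpose F ** H + transpose H ** F) ** M)) (at F)"
    using bounded_bilinear.FDERIV[OF mult_bil g1 has_derivative_const[of M]] by simp
  then show ?thesis by (simp add: add.commute)
qed

lemma det_cont: "continuous_on UNIV (det :: mat3 \<Rightarrow> real)"
proof -
  have "\<And>Y::mat3. isCont det Y"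
    using differentiable_imp_continuous_within det_diff by (metis (no_types) eta_contract_eq)
  then show ?thesis by (simp add: continuous_at_imp_continuous_on)
qed

lemma open_det_pos: "open {Y::mat3. 0 < det Y}"
  using open_Collect_less[of "\<lambda>_. 0" det] det_cont by simp

lemma W_diff:
  assumes C1: "C1_on posR3 \<Psi>"
    and W_Psi: "\<forall>Fe. det Fe > 0 \<longrightarrow>
        W Fe = \<Psi> (I1 (transpose Fe ** Fe), I2 (transpose Fe ** Fe), I3 (transpose Fe ** Fe))"
    and Y0: "det Y0 > 0"
  shows "W differentiable (at Y0)"
proof -
  let ?g = "\<lambda>Y. \<Psi> (J (transpose Y ** Y ** mat 1))"
  have gp: "J (transpose Y0 ** Y0) \<in> posR3"
    using invariants_pos gram_pos[of Y0] Y0 unfolding J_def posR3_def by auto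
  have "(\<lambda>Y. transpose Y ** Y ** mat 1) differentiable (at Y0)"
    using gram_deriv[of "mat 1" Y0] unfolding differentiable_def by blast
  then have "(\<lambda>Y. J (transpose Y ** Y ** mat 1)) differentiable (at Y0)"
    using differentiable_compose[OF J_diff] by blast
  then have "?g differentiable (at Y0)"
    using differentiable_compose[of \<Psi> "\<lambda>Y. J (transpose Y ** Y ** mat 1)" Y0 UNIV] Psi_diff[OF C1] gp
    by simp
  then obtain D where D: "(?g has_derivative D) (at Y0)" unfolding differentiable_def by blast
  have "(W has_derivative D) (at Y0)"
  proof (rule has_derivative_transform_within_open[OF D open_det_pos])
    show "Y0 \<in> {Y. 0 < det Y}" using Y0 by simp
    fix Y assume "Y \<in> {Y::mat3. 0 < det Y}"
    then show "?g Y = W Y" using W_Psi by (simp add: J_def I1_def I2_def I3_def)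
  qed
  then show ?thesis unfolding differentiable_def by blast
qed

lemma grad_works:
  fixes f :: "mat3 \<Rightarrow> real"
  assumes "f differentiable (at X)"
  shows "(f has_derivative (\<lambda>H. grad f X \<bullet> H)) (at X)"
proof -
  obtain D where D: "(f has_derivative D) (at X)" using assms unfolding differentiable_def by blast
  have bl: "bounded_linear D" using has_derivative_bounded_linear[OF D] .
  define G where "G = (\<Sum>b\<in>Basis. D b *\<^sub>R b)"
  have DG: "D = (\<lambda>H. G \<bullet> H)"
  proof
    fix H :: mat3
    have "D H = D (\<Sum>b\<in>Basis. (H \<bullet> b) *\<^sub>R b)" by (simp add: euclidean_representation)
    also have "\<dots> = (\<Sum>b\<in>Basis. D ((H \<bullet> b) *\<^sub>R b))"
      by (subst linear_sum[OF bounded_linear.linear[OF bl]]) (simp add: o_def)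
    also have "\<dots> = (\<Sum>b\<in>Basis. (H \<bullet> b) * D b)"
      using linear_scale[OF bounded_linear.linear[OF bl]] by simp
    also have "\<dots> = G \<bullet> H" unfolding G_def inner_sum_left inner_scaleR_left
      by (simp add: inner_commute[of H] mult.commute)
    finally show "D H = G \<bullet> H" .
  qed
  have P: "(f has_derivative (\<lambda>H. G \<bullet> H)) (at X)" using D DG by simp
  have "grad f X = G" unfolding grad_def
  proof (rule the_equality)
    show "(f has_derivative (\<lambda>H. G \<bullet> H)) (at X)" by (rule P)
    fix G' assume "(f has_derivative (\<lambda>H. G' \<bullet> H)) (at X)"
    then have "(\<lambda>H. G' \<bullet> H) = (\<lambda>H. G \<bullet> H)" using has_derivative_unique P by blast
    then have "G' \<bullet> (G' - G) = G \<bullet> (G' - G)" by metis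
    then have "(G' - G) \<bullet> (G' - G) = 0" by (simp add: inner_diff_left)
    then show "G' = G" by simp
  qed
  then show ?thesis using P by simp
qed



lemma J_swap: "J ((A::mat3) ** B) = J (B ** A)"
  unfolding J_def by (simp add: trace_mul_sym[of A B] tcof_swap det_swap)

lemma trace_transpose3: "trace (transpose (A::mat3)) = trace A"
  by (simp add: trace_def transpose_def)

lemma frob_transpose: "(A::mat3) \<bullet> transpose B = transpose A \<bullet> B"
proof -
  have "A \<bullet> transpose B = trace (transpose (B ** A))" by (simp add: frob matrix_transpose_mul)
  also have "\<dots> = trace (A ** B)" by (simp add: trace_transpose3 trace_mul_sym[of B A])
  also have "\<dots> = transpose A \<bullet> B" by (simp add: frob)
  finally show ?thesis .
qed

lemma inner_eq:
  fixes P Q :: mat3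
  assumes "\<And>H. P \<bullet> H = Q \<bullet> H"
  shows "P = Q"
proof -
  have "P \<bullet> (P - Q) = Q \<bullet> (P - Q)" by (rule assms)
  then have "(P - Q) \<bullet> (P - Q) = 0" by (simp add: inner_diff_left)
  then show ?thesis by simp
qed

lemma line_deriv:
  fixes f :: "mat3 \<Rightarrow> real"
  assumes "f differentiable (at X)"
  shows "((\<lambda>t::real. f (X + t *\<^sub>R V)) has_derivative (\<lambda>t. t * (grad f X \<bullet> V))) (at 0)"
proof -
  have l: "((\<lambda>t::real. X + t *\<^sub>R V) has_derivative (\<lambda>t. t *\<^sub>R V)) (at 0)"
    by (auto intro!: derivative_eq_intros)
  have g: "(f has_derivative (\<lambda>H. grad f X \<bullet> H)) (at ((\<lambda>t::real. X + t *\<^sub>R V) 0))"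
    using grad_works[OF assms] by simp
  show ?thesis using diff_chain_at[OF l g] by (simp add: o_def)
qed

lemma key_relation:
  fixes F Fp :: mat3
  assumes C1: "C1_on posR3 \<Psi>"
    and W_Psi: "\<forall>Fe. det Fe > 0 \<longrightarrow>
        W Fe = \<Psi> (I1 (transpose Fe ** Fe), I2 (transpose Fe ** Fe), I3 (transpose Fe ** Fe))"
    and dF: "det F > 0" and dFp: "det Fp > 0"
  defines "Fpi \<equiv> matrix_inv Fp"
    and "Cpi \<equiv> matrix_inv (transpose Fp ** Fp)"
    and "X \<equiv> transpose F ** F ** matrix_inv (transpose Fp ** Fp)"
  shows "grad W (F ** Fpi) ** transpose Fpi
           = F ** Cpi ** transpose (grad (Wtilde \<Psi>) X) + F ** grad (Wtilde \<Psi>) X ** transpose Cpi"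
    and "grad (Wtilde \<Psi>) X ** transpose X = transpose X ** grad (Wtilde \<Psi>) X"
    and "Cpi = Fpi ** transpose Fpi"
proof -
  have XC: "X = transpose F ** F ** Cpi" unfolding X_def Cpi_def ..
  define gT where "gT = grad (Wtilde \<Psi>) X"
  define gW where "gW = grad W (F ** Fpi)"
  have nz: "det Fp \<noteq> 0" using dFp by simp
  have i1: "Fp ** Fpi = mat 1" and i2: "Fpi ** Fp = mat 1"
    using inv_props[OF nz] unfolding Fpi_def by auto
  have "det Fp * det Fpi = 1" using det_mul[of Fp Fpi] i1 by simp
  then have dFpi: "det Fpi > 0" using dFp by (metis zero_less_mult_pos zero_less_one)
  have CpiE: "Cpi = Fpi ** transpose Fpi"
  proof -
    have "(transpose Fp ** Fp) ** (Fpi ** transpose Fpi) = transpose Fp ** (Fp ** Fpi) ** transpose Fpi"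
      by (simp add: matrix_mul_assoc)
    also have "\<dots> = transpose (Fpi ** Fp)" using i1 by (simp add: matrix_transpose_mul)
    also have "\<dots> = mat 1" using i2 by simp
    finally show ?thesis unfolding Cpi_def by (rule inv_unique)
  qed
  then show "Cpi = Fpi ** transpose Fpi" .
  have JY: "J (transpose Y ** Y ** Cpi) = J (transpose (Y ** Fpi) ** (Y ** Fpi))" for Y
  proof -
    have "transpose Y ** Y ** Cpi = (transpose Y ** Y ** Fpi) ** transpose Fpi"
      unfolding CpiE by (simp add: matrix_mul_assoc)
    then have "J (transpose Y ** Y ** Cpi) = J (transpose Fpi ** (transpose Y ** Y ** Fpi))"
      by (simp add: J_swap)
    also have "transpose Fpi ** (transpose Y ** Y ** Fpi) = transpose (Y ** Fpi) ** (Y ** Fpi)"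
      by (simp add: matrix_transpose_mul matrix_mul_assoc)
    finally show ?thesis .
  qed
  have dFe: "det (F ** Fpi) > 0" using dF dFpi by (simp add: det_mul)
  have JX: "J X \<in> posR3"
  proof -
    have "J X = J (transpose (F ** Fpi) ** (F ** Fpi))" unfolding XC by (rule JY)
    moreover have "det (F ** Fpi) \<noteq> 0" using dFe by simp
    ultimately show ?thesis
      using invariants_pos gram_pos[of "F ** Fpi"] unfolding J_def posR3_def by auto
  qed
  have WtD: "Wtilde \<Psi> differentiable (at X)" by (rule Wt_diff[OF C1 JX])
  have WD: "W differentiable (at (F ** Fpi))" by (rule W_diff[OF C1 W_Psi dFe])
  have phi: "((\<lambda>Y. W (Y ** Fpi)) has_derivative (\<lambda>H. gW \<bullet> (H ** Fpi))) (at F)"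
  proof -
    have l: "((\<lambda>Y::mat3. Y ** Fpi) has_derivative (\<lambda>Y. Y ** Fpi)) (at F)"
      by (rule bounded_linear_imp_has_derivative[OF rmult_bl])
    have g: "(W has_derivative (\<lambda>H. gW \<bullet> H)) (at ((\<lambda>Y::mat3. Y ** Fpi) F))"
      using grad_works[OF WD] unfolding gW_def by simp
    show ?thesis using diff_chain_at[OF l g] by (simp add: o_def)
  qed
  have psi: "((\<lambda>Y. Wtilde \<Psi> (transpose Y ** Y ** Cpi)) has_derivative
              (\<lambda>H. gT \<bullet> ((transpose H ** F + transpose F ** H) ** Cpi))) (at F)"
  proof -
    have g: "(Wtilde \<Psi> has_derivative (\<lambda>H. gT \<bullet> H)) (at ((\<lambda>Y::mat3. transpose Y ** Y ** Cpi) F))"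
      using grad_works[OF WtD] unfolding gT_def XC by simp
    show ?thesis using diff_chain_at[OF gram_deriv[of Cpi F] g] by (simp add: o_def)
  qed
  have psi2: "((\<lambda>Y. W (Y ** Fpi)) has_derivative
              (\<lambda>H. gT \<bullet> ((transpose H ** F + transpose F ** H) ** Cpi))) (at F)"
  proof (rule has_derivative_transform_within_open[OF psi open_det_pos])
    show "F \<in> {Y. 0 < det Y}" using dF by simp
    fix Y assume "Y \<in> {Y::mat3. 0 < det Y}"
    then have "det (Y ** Fpi) > 0" using dFpi by (simp add: det_mul)
    then have "W (Y ** Fpi) = \<Psi> (J (transpose (Y ** Fpi) ** (Y ** Fpi)))"
      using W_Psi by (simp add: J_def I1_def I2_def I3_def)
    moreover have "Wtilde \<Psi> (transpose Y ** Y ** Cpi) = \<Psi> (J (transpose Y ** Y ** Cpi))"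
      by (simp add: Wtilde_def J_def)
    ultimately show "Wtilde \<Psi> (transpose Y ** Y ** Cpi) = W (Y ** Fpi)"
      by (simp only: JY)
  qed
  have eqH: "gW \<bullet> (H ** Fpi) = gT \<bullet> ((transpose H ** F + transpose F ** H) ** Cpi)" for H
    using has_derivative_unique[OF phi psi2] by metis
  show "gW ** transpose Fpi = F ** Cpi ** transpose gT + F ** gT ** transpose Cpi"
  proof (rule inner_eq)
    fix H :: mat3
    have a: "gW \<bullet> (H ** Fpi) = (gW ** transpose Fpi) \<bullet> H" by (rule frob_mult_left)
    have b: "gT \<bullet> (transpose H ** (F ** Cpi)) = (F ** Cpi ** transpose gT) \<bullet> H"
    proof -
      have "gT \<bullet> (transpose H ** (F ** Cpi)) = (gT ** transpose (F ** Cpi)) \<bullet> transpose H"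
        by (rule frob_mult_left)
      also have "\<dots> = transpose (gT ** transpose (F ** Cpi)) \<bullet> H" by (rule frob_transpose)
      also have "\<dots> = (F ** Cpi ** transpose gT) \<bullet> H" by (simp add: matrix_transpose_mul)
      finally show ?thesis .
    qed
    have c: "gT \<bullet> (transpose F ** (H ** Cpi)) = (F ** gT ** transpose Cpi) \<bullet> H"
    proof -
      have "gT \<bullet> (transpose F ** (H ** Cpi)) = (F ** gT) \<bullet> (H ** Cpi)"
        using frob_mult_right[of gT "transpose F" "H ** Cpi"] by simp
      also have "\<dots> = (F ** gT ** transpose Cpi) \<bullet> H" by (rule frob_mult_left)
      finally show ?thesis .
    qed
    have "(transpose H ** F + transpose F ** H) ** Cpi = transpose H ** (F ** Cpi) + transpose F ** (H ** Cpi)"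
      by (simp add: mm_add_r matrix_mul_assoc)
    then show "(gW ** transpose Fpi) \<bullet> H = (F ** Cpi ** transpose gT + F ** gT ** transpose Cpi) \<bullet> H"
      using eqH[of H] a b c by (simp add: inner_add_right inner_add_left)
  qed
  show "gT ** transpose X = transpose X ** gT"
  proof (rule inner_eq)
    fix K :: mat3
    have fa: "(\<lambda>t::real. Wtilde \<Psi> (X + t *\<^sub>R (K ** X))) = (\<lambda>t. Wtilde \<Psi> (X + t *\<^sub>R (X ** K)))"
    proof
      fix t :: real
      have "X + t *\<^sub>R (K ** X) = (mat 1 + t *\<^sub>R K) ** X"
        by (simp add: mm_add_r scalar_matrix_assoc)
      moreover have "X + t *\<^sub>R (X ** K) = X ** (mat 1 + t *\<^sub>R K)"
        by (simp add: matrix_add_ldistrib matrix_scalar_ac scalar_matrix_assoc)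
      ultimately show "Wtilde \<Psi> (X + t *\<^sub>R (K ** X)) = Wtilde \<Psi> (X + t *\<^sub>R (X ** K))"
        by (simp add: Wtilde_swap[of _ "mat 1 + t *\<^sub>R K" X])
    qed
    note d1 = line_deriv[OF WtD, of "K ** X"]
    note d2 = line_deriv[OF WtD, of "X ** K"]
    have "(\<lambda>t::real. t * (gT \<bullet> (K ** X))) = (\<lambda>t. t * (gT \<bullet> (X ** K)))"
      using has_derivative_unique[OF d1[unfolded fa] d2] unfolding gT_def by simp
    then have "gT \<bullet> (K ** X) = gT \<bullet> (X ** K)" by (metis mult_1)
    moreover have "gT \<bullet> (K ** X) = (gT ** transpose X) \<bullet> K" by (rule frob_mult_left)
    moreover have "gT \<bullet> (X ** K) = (transpose X ** gT) \<bullet> K" by (rule frob_mult_right)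
    ultimately show "(gT ** transpose X) \<bullet> K = (transpose X ** gT) \<bullet> K" by simp
  qed
qed



lemma setc: "{c *\<^sub>R (Z::mat3) | c. c \<ge> 0} = (\<lambda>c. c *\<^sub>R Z) ` {0..}"
  by auto

lemma Ncone_rot:
  fixes R S :: mat3
  assumes RR: "transpose R ** R = mat 1"
  shows "Ncone r (R ** S ** transpose R) = (\<lambda>X. R ** X ** transpose R) ` Ncone r S"
proof -
  have RR2: "R ** transpose R = mat 1" using RR matrix_left_right_inverse by blast
  have sc: "R ** (a *\<^sub>R Y) ** transpose R = a *\<^sub>R (R ** Y ** transpose R)" for a Y
    by (simp add: matrix_scalar_ac scalar_matrix_assoc)
  have tr: "trace (R ** S ** transpose R) = trace S"
  proof -
    have "trace ((R ** S) ** transpose R) = trace (transpose R ** (R ** S))" by (rule trace_mul_sym)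
    also have "\<dots> = trace S" using RR by (simp add: matrix_mul_assoc)
    finally show ?thesis .
  qed
  have dev: "dev3 (R ** S ** transpose R) = R ** dev3 S ** transpose R"
  proof -
    have "R ** dev3 S ** transpose R = R ** S ** transpose R - (trace S / 3) *\<^sub>R (R ** mat 1 ** transpose R)"
      unfolding dev3_def by (simp add: mm_sub_l mm_sub_r sc)
    then show ?thesis unfolding dev3_def tr using RR2 by simp
  qed
  have nrm: "norm (R ** D ** transpose R) = norm D" for D
  proof -
    have "(R ** D ** transpose R) \<bullet> (R ** D ** transpose R) = trace (R ** (transpose D ** (transpose R ** R) ** D) ** transpose R)"
      unfolding frob by (simp add: matrix_transpose_mul matrix_mul_assoc)
    also have "\<dots> = trace (R ** (transpose D ** D) ** transpose R)" using RR by simp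
    also have "\<dots> = trace (transpose R ** (R ** (transpose D ** D)))" by (rule trace_mul_sym)
    also have "\<dots> = trace (transpose D ** D)" using RR by (simp add: matrix_mul_assoc)
    also have "\<dots> = D \<bullet> D" by (simp add: frob)
    finally show ?thesis by (simp add: norm_eq_sqrt_inner)
  qed
  have nd: "norm (dev3 (R ** S ** transpose R)) = norm (dev3 S)" unfolding dev nrm ..
  show ?thesis
  proof (cases "norm (dev3 S) < r")
    case True then show ?thesis unfolding Ncone_def nd by simp
  next
    case False
    show ?thesis
    proof (cases "norm (dev3 S) = r")
      case True
      have "(\<lambda>X. R ** X ** transpose R) ` ((\<lambda>c. c *\<^sub>R (dev3 S /\<^sub>R norm (dev3 S))) ` {0..})
          = (\<lambda>c. c *\<^sub>R (dev3 (R ** S ** transpose R) /\<^sub>R norm (dev3 (R ** S ** transpose R)))) ` {0..}"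
        unfolding image_image nd dev by (simp add: sc nrm)
      then show ?thesis unfolding Ncone_def nd setc using True False by simp
    next
      case False2: False
      then show ?thesis unfolding Ncone_def nd using False by simp
    qed
  qed
qed

lemma msqrt_facts:
  fixes Fp :: mat3
  assumes dFp: "det Fp \<noteq> 0"
  defines "U \<equiv> msqrt (transpose Fp ** Fp)"
  shows "transpose U = U" "U ** U = transpose Fp ** Fp" "U ** matrix_inv U = mat 1"
    "matrix_inv U ** U = mat 1" "transpose (matrix_inv U) = matrix_inv U"
    "matrix_inv (transpose Fp ** Fp) = matrix_inv U ** matrix_inv U"
proof -
  have P: "transpose U = U \<and> pos_def U \<and> U ** U = transpose Fp ** Fp"
    unfolding U_def using msqrt_props gram_pos[OF dFp] by blast
  then show sU: "transpose U = U" and UU: "U ** U = transpose Fp ** Fp" by auto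
  have "det U * det U = det Fp * det Fp" using UU det_mul[of U U] det_mul[of "transpose Fp" Fp] by simp
  then have "det U \<noteq> 0" using dFp by auto
  then show i1: "U ** matrix_inv U = mat 1" and i2: "matrix_inv U ** U = mat 1" using inv_props by auto
  have "U ** transpose (matrix_inv U) = mat 1"
    using arg_cong[OF i2, of transpose] sU by (simp add: matrix_transpose_mul)
  then have "matrix_inv U = transpose (matrix_inv U)" by (rule inv_unique)
  then show "transpose (matrix_inv U) = matrix_inv U" by simp
  have "(transpose Fp ** Fp) ** (matrix_inv U ** matrix_inv U) = mat 1"
  proof -
    have "(U ** U) ** (matrix_inv U ** matrix_inv U) = U ** (U ** matrix_inv U) ** matrix_inv U"
      by (simp add: matrix_mul_assoc)
    then show ?thesis using i1 UU by simp
  qed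
  then show "matrix_inv (transpose Fp ** Fp) = matrix_inv U ** matrix_inv U" by (rule inv_unique)
qed



lemma part1:
  fixes F Fp :: mat3
  assumes C1: "C1_on posR3 \<Psi>"
    and W_Psi: "\<forall>Fe. det Fe > 0 \<longrightarrow>
        W Fe = \<Psi> (I1 (transpose Fe ** Fe), I2 (transpose Fe ** Fe), I3 (transpose Fe ** Fe))"
    and dF: "det F > 0" and dFp: "det Fp > 0"
  shows "neg_sandwich (matrix_inv Fp) (Ncone r (Sigma_e W F Fp)) (transpose (matrix_inv Fp))
       = neg_sandwich (matrix_inv (msqrt (transpose Fp ** Fp)))
           (Ncone r (Sigma_ring \<Psi> (transpose F ** F) (transpose Fp ** Fp)))
           (matrix_inv (msqrt (transpose Fp ** Fp)))"
proof -
  define Fpi where "Fpi = matrix_inv Fp"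
  define Cpi where "Cpi = matrix_inv (transpose Fp ** Fp)"
  define U where "U = msqrt (transpose Fp ** Fp)"
  define Ui where "Ui = matrix_inv U"
  define C where "C = transpose F ** F"
  define gT where "gT = grad (Wtilde \<Psi>) (transpose F ** F ** matrix_inv (transpose Fp ** Fp))"
  define gW where "gW = grad W (F ** Fpi)"
  note kr = key_relation[OF C1 W_Psi dF dFp]
  have E1: "gW ** transpose Fpi = F ** Cpi ** transpose gT + F ** gT ** transpose Cpi"
    using kr(1) unfolding gW_def Fpi_def Cpi_def gT_def .
  have comm: "gT ** transpose (C ** Cpi) = transpose (C ** Cpi) ** gT"
    using kr(2) unfolding gT_def C_def Cpi_def .
  have CpiE: "Cpi = Fpi ** transpose Fpi" using kr(3) unfolding Cpi_def Fpi_def .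
  have nz: "det Fp \<noteq> 0" using dFp by simp
  have i1: "Fp ** Fpi = mat 1" and i2: "Fpi ** Fp = mat 1"
    using inv_props[OF nz] unfolding Fpi_def by auto
  note mf = msqrt_facts[OF nz]
  have sU: "transpose U = U" and UUi: "U ** Ui = mat 1" and UiU: "Ui ** U = mat 1"
    and sUi: "transpose Ui = Ui" and CpiU: "Cpi = Ui ** Ui"
    using mf unfolding U_def[symmetric] Ui_def[symmetric] Cpi_def[symmetric] by auto
  have sC: "transpose C = C" by (simp add: C_def matrix_transpose_mul)
  have sCpi: "transpose Cpi = Cpi" using CpiE by (simp add: matrix_transpose_mul)
  have comm': "C ** Cpi ** transpose gT = transpose gT ** C ** Cpi"
  proof -
    have "transpose (gT ** transpose (C ** Cpi)) = transpose (transpose (C ** Cpi) ** gT)"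
      using comm by simp
    then have "(C ** Cpi) ** transpose gT = transpose gT ** (C ** Cpi)"
      by (simp only: matrix_transpose_mul transpose_transpose)
    then show ?thesis by (simp add: matrix_mul_assoc)
  qed
  define M where "M = transpose gT ** C + C ** gT"
  have tFF: "transpose Fpi ** transpose Fp = mat 1"
    using arg_cong[OF i1, of transpose] by (simp add: matrix_transpose_mul)
  have gWe: "gW = (F ** Cpi ** transpose gT + F ** gT ** Cpi) ** transpose Fp"
  proof -
    have "gW = gW ** (transpose Fpi ** transpose Fp)" using tFF by simp
    also have "\<dots> = (gW ** transpose Fpi) ** transpose Fp" by (simp add: matrix_mul_assoc)
    finally show ?thesis using E1 sCpi by simp
  qed
  have CpF: "Cpi ** transpose Fp = Fpi"
  proof -
    have "Cpi ** transpose Fp = Fpi ** (transpose Fpi ** transpose Fp)" unfolding CpiE by (simp add: matrix_mul_assoc)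
    then show ?thesis using tFF by simp
  qed
  have Se: "Sigma_e W F Fp = transpose Fpi ** M ** Fpi"
  proof -
    have "Sigma_e W F Fp = transpose Fpi ** (transpose F ** gW)"
      by (simp add: Sigma_e_def Let_def matrix_transpose_mul matrix_mul_assoc Fpi_def gW_def)
    also have "transpose F ** gW = (C ** Cpi ** transpose gT + C ** gT ** Cpi) ** transpose Fp"
      unfolding gWe C_def by (simp add: matrix_add_ldistrib matrix_mul_assoc)
    also have "C ** Cpi ** transpose gT + C ** gT ** Cpi = M ** Cpi"
      unfolding M_def comm' by (simp add: mm_add_r matrix_mul_assoc)
    also have "M ** Cpi ** transpose Fp = M ** Fpi"
      using CpF by (simp add: matrix_mul_assoc[symmetric])
    finally show ?thesis by (simp add: matrix_mul_assoc)
  qed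
  have Sr: "Sigma_ring \<Psi> (transpose F ** F) (transpose Fp ** Fp) = Ui ** M ** Ui"
  proof -
    have "Sigma_ring \<Psi> (transpose F ** F) (transpose Fp ** Fp) = 2 *\<^sub>R (Ui ** sym (C ** gT) ** Ui)"
      unfolding Sigma_ring_def Let_def gT_def Ui_def U_def C_def by simp
    also have "sym (C ** gT) = (1/2) *\<^sub>R M"
      unfolding sym_def M_def using sC by (simp add: matrix_transpose_mul add.commute)
    finally show ?thesis by (simp add: matrix_scalar_ac scalar_matrix_assoc)
  qed
  define R where "R = transpose Fpi ** U"
  have Rt: "transpose R = U ** Fpi" using sU by (simp add: R_def matrix_transpose_mul)
  have RR: "transpose R ** R = mat 1"
  proof -
    have "transpose R ** R = U ** (Fpi ** transpose Fpi) ** U" unfolding Rt unfolding R_def by (simp add: matrix_mul_assoc)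
    also have "\<dots> = (U ** Ui) ** (Ui ** U)" unfolding CpiE[symmetric] CpiU by (simp add: matrix_mul_assoc)
    finally show ?thesis using UUi UiU by simp
  qed
  have SeR: "Sigma_e W F Fp = R ** (Ui ** M ** Ui) ** transpose R"
  proof -
    have "R ** (Ui ** M ** Ui) ** transpose R = transpose Fpi ** (U ** Ui) ** M ** (Ui ** U) ** Fpi"
      unfolding Rt unfolding R_def by (simp add: matrix_mul_assoc)
    then show ?thesis using UUi UiU Se by simp
  qed
  have FR: "Fpi ** R = Ui"
  proof -
    have "Fpi ** R = Cpi ** U" unfolding R_def CpiE by (simp add: matrix_mul_assoc)
    also have "\<dots> = Ui ** (Ui ** U)" unfolding CpiU by (simp add: matrix_mul_assoc)
    finally show ?thesis using UiU by simp
  qed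
  have RF: "transpose R ** transpose Fpi = Ui"
    using arg_cong[OF FR, of transpose] sUi by (simp add: matrix_transpose_mul)
  have el: "Fpi ** (R ** X ** transpose R) ** transpose Fpi = Ui ** X ** Ui" for X
  proof -
    have "Fpi ** (R ** X ** transpose R) ** transpose Fpi = (Fpi ** R) ** X ** (transpose R ** transpose Fpi)"
      by (simp add: matrix_mul_assoc)
    then show ?thesis using FR RF by simp
  qed
  have "neg_sandwich Fpi (Ncone r (Sigma_e W F Fp)) (transpose Fpi)
        = neg_sandwich Ui (Ncone r (Ui ** M ** Ui)) Ui"
    unfolding SeR Ncone_rot[OF RR] neg_sandwich_def image_image el ..
  then show ?thesis unfolding Fpi_def[symmetric] U_def[symmetric] Ui_def[symmetric] Sr .
qed



lemma sandwich_iff: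
  fixes U Ui d :: mat3
  assumes UUi: "U ** Ui = mat 1" and UiU: "Ui ** U = mat 1"
  shows "(d \<in> neg_sandwich Ui N Ui) \<longleftrightarrow> (U ** d ** U \<in> (\<lambda>X. - X) ` N)"
proof
  assume "d \<in> neg_sandwich Ui N Ui"
  then obtain X where X: "X \<in> N" "d = - (Ui ** X ** Ui)" unfolding neg_sandwich_def by blast
  have "U ** (Ui ** X ** Ui) ** U = (U ** Ui) ** X ** (Ui ** U)" by (simp add: matrix_mul_assoc)
  then have "U ** d ** U = - X" using X UUi UiU by (simp add: mm_neg_l mm_neg_r)
  then show "U ** d ** U \<in> (\<lambda>X. - X) ` N" using X by blast
next
  assume "U ** d ** U \<in> (\<lambda>X. - X) ` N"
  then obtain X where X: "X \<in> N" "U ** d ** U = - X" by blast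
  have "Ui ** (U ** d ** U) ** Ui = (Ui ** U) ** d ** (U ** Ui)" by (simp add: matrix_mul_assoc)
  then have "d = - (Ui ** X ** Ui)" using X UUi UiU by (simp add: mm_neg_l mm_neg_r)
  then show "d \<in> neg_sandwich Ui N Ui" using X unfolding neg_sandwich_def by blast
qed

theorem mainTheorem9:
  fixes \<Psi> :: "real \<times> real \<times> real \<Rightarrow> real"
    and W :: "mat3 \<Rightarrow> real"
    and r :: real and F Fp :: mat3
    and Fpt :: "real \<Rightarrow> mat3"
  assumes Psi_C1: "C1_on posR3 \<Psi>"
    and W_Psi: "\<forall>Fe. det Fe > 0 \<longrightarrow>
        W Fe = \<Psi> (I1 (transpose Fe ** Fe), I2 (transpose Fe ** Fe), I3 (transpose Fe ** Fe))"
    and W_obj_iso: "\<forall>Fe Q R. det Fe > 0 \<longrightarrow> Q \<in> SO3 \<longrightarrow> R \<in> SO3 \<longrightarrow> W (Q ** Fe ** R) = W Fe"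
    and r_pos: "r > 0"
    and F_GL: "det F > 0"
    and Fp_GL: "det Fp > 0"
    and Fpt_GL: "\<forall>t. det (Fpt t) > 0"
    and Fpt_diff: "\<forall>t. Fpt differentiable (at t)"
  shows "neg_sandwich (matrix_inv Fp) (Ncone r (Sigma_e W F Fp)) (transpose (matrix_inv Fp))
           = neg_sandwich (matrix_inv (msqrt (transpose Fp ** Fp)))
               (Ncone r (Sigma_ring \<Psi> (transpose F ** F) (transpose Fp ** Fp)))
               (matrix_inv (msqrt (transpose Fp ** Fp)))
       \<and> (\<forall>t. let Cp = transpose (Fpt t) ** Fpt t;
                 dCpinv = vector_derivative (\<lambda>s. matrix_inv (transpose (Fpt s) ** Fpt s)) (at t)
             in (dCpinv \<in> neg_sandwich (matrix_inv (Fpt t)) (Ncone r (Sigma_e W F (Fpt t)))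
                             (transpose (matrix_inv (Fpt t))))
                \<longleftrightarrow> (msqrt Cp ** dCpinv ** msqrt Cp
                       \<in> (\<lambda>X. - X) ` Ncone r (Sigma_ring \<Psi> (transpose F ** F) Cp)))"
proof
  show "neg_sandwich (matrix_inv Fp) (Ncone r (Sigma_e W F Fp)) (transpose (matrix_inv Fp))
           = neg_sandwich (matrix_inv (msqrt (transpose Fp ** Fp)))
               (Ncone r (Sigma_ring \<Psi> (transpose F ** F) (transpose Fp ** Fp)))
               (matrix_inv (msqrt (transpose Fp ** Fp)))"
    by (rule part1[OF Psi_C1 W_Psi F_GL Fp_GL])
  show "\<forall>t. let Cp = transpose (Fpt t) ** Fpt t;
                 dCpinv = vector_derivative (\<lambda>s. matrix_inv (transpose (Fpt s) ** Fpt s)) (at t)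
             in (dCpinv \<in> neg_sandwich (matrix_inv (Fpt t)) (Ncone r (Sigma_e W F (Fpt t)))
                             (transpose (matrix_inv (Fpt t))))
                \<longleftrightarrow> (msqrt Cp ** dCpinv ** msqrt Cp
                       \<in> (\<lambda>X. - X) ` Ncone r (Sigma_ring \<Psi> (transpose F ** F) Cp))"
  proof
    fix t
    have dt: "det (Fpt t) > 0" using Fpt_GL by blast
    have nz: "det (Fpt t) \<noteq> 0" using dt by simp
    note mf = msqrt_facts[OF nz]
    note p = part1[OF Psi_C1 W_Psi F_GL dt, of r]
    show "let Cp = transpose (Fpt t) ** Fpt t;
                 dCpinv = vector_derivative (\<lambda>s. matrix_inv (transpose (Fpt s) ** Fpt s)) (at t)
             in (dCpinv \<in> neg_sandwich (matrix_inv (Fpt t)) (Ncone r (Sigma_e W F (Fpt t)))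
                             (transpose (matrix_inv (Fpt t))))
                \<longleftrightarrow> (msqrt Cp ** dCpinv ** msqrt Cp
                       \<in> (\<lambda>X. - X) ` Ncone r (Sigma_ring \<Psi> (transpose F ** F) Cp))"
      unfolding Let_def p by (rule sandwich_iff[OF mf(3) mf(4)])
  qed
qed


end
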